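(* $\mathrm{cov}(\mathcal{M})\leq\mathfrak{s}(\mathbb{R})$.
   Context: $\mathrm{cov}(\mathcal{M})$ is the smallest number of meager subsets of $\mathbb{R}$ whose union is $\mathbb{R}$. For infinite sets $U, A$, say $U$ splits $A$ if both $A\cap U$ and $A\setminus U$ are infinite. $\mathfrak{s}(\mathbb{R})$ is the smallest cardinality of a family $\mathcal{U}$ of open subsets of $\mathbb{R}$ (usual topology) such that every infinite $A\subseteq\mathbb{R}$ is split by some $U\in\mathcal{U}$. *)

theory Defs
  imports "HOL-Analysis.Analysis" "HOL-Library.Equipollence"
begin

definition nowhere_dense :: "real set \<Rightarrow> bool" where
  "nowhere_dense S \<longleftrightarrow> interior (closure S) = {}"

definition meager :: "real set \<Rightarrow> bool" where
  "meager M \<longleftrightarrow> (\<exists>\<N>. countable \<N> \<and> (\<forall>N\<in>\<N>. nowhere_dense N) \<and> M \<subseteq> \<Union>\<N>)"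

definition splits :: "'a set \<Rightarrow> 'a set \<Rightarrow> bool" where
  "splits U A \<longleftrightarrow> infinite (A \<inter> U) \<and> infinite (A - U)"

definition meager_cover :: "real set set \<Rightarrow> bool" where
  "meager_cover \<F> \<longleftrightarrow> (\<forall>M\<in>\<F>. meager M) \<and> \<Union>\<F> = UNIV"

definition open_splitting_family :: "real set set \<Rightarrow> bool" where
  "open_splitting_family \<U> \<longleftrightarrow> (\<forall>U\<in>\<U>. open U) \<and>
     (\<forall>A::real set. infinite A \<longrightarrow> (\<exists>U\<in>\<U>. splits U A))"

end

theory Submission
  imports Defs
begin

lemma nd_frontier:
  assumes "open (U::real set)"
  shows "nowhere_dense (frontier U)"
proof -
  have "interior (frontier U) = {}"
  proof (rule ccontr)
    assume "interior (frontier U) \<noteq> {}"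
    then obtain y where y: "y \<in> interior (frontier U)" by blast
    let ?T = "interior (frontier U)"
    have T: "open ?T" "?T \<subseteq> closure U - U"
      using interior_subset[of "frontier U"] assms
      by (auto simp: frontier_def interior_open)
    then have "?T \<inter> U = {}" by blast
    then have "?T \<inter> closure U = {}" using open_Int_closure_eq_empty[OF T(1)] by blast
    then show False using y T(2) by blast
  qed
  then show ?thesis by (simp add: nowhere_dense_def closure_closed)
qed

lemma meager_frontier:
  assumes "open (U::real set)"
  shows "meager (frontier U)"
  unfolding meager_def
  by (rule exI[of _ "{frontier U}"]) (auto simp: nd_frontier[OF assms])

lemma fin_lemma:
  assumes lim: "(f \<longlongrightarrow> x) sequentially" and "open S" "x \<in> S"
  shows "finite (f ` {n. f n \<notin> S})"
proof -
  have "eventually (\<lambda>n. f n \<in> S) sequentially"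
    using topological_tendstoD[OF lim assms(2,3)] .
  then obtain N where "\<forall>n\<ge>N. f n \<in> S" by (auto simp: eventually_sequentially)
  then have "{n. f n \<notin> S} \<subseteq> {..<N}" by (auto simp: not_less[symmetric])
  then show ?thesis using finite_subset by blast
qed

lemma covered:
  assumes "open_splitting_family \<U>"
  shows "\<exists>U\<in>\<U>. (x::real) \<in> frontier U"
proof -
  define f where "f = (\<lambda>n::nat. x + 1 / (real n + 1))"
  have lim: "(f \<longlongrightarrow> x) sequentially"
    unfolding f_def
    using tendsto_add[OF tendsto_const[of x] LIMSEQ_inverse_real_of_nat]
    by (simp add: inverse_eq_divide add.commute)
  have "inj f" unfolding f_def by (auto simp: inj_def)
  then have "infinite (range f)" using finite_imageD by blast
  then obtain U where U: "U \<in> \<U>" "splits U (range f)"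
    using assms unfolding open_splitting_family_def by blast
  have oU: "open U" using assms U(1) unfolding open_splitting_family_def by blast
  have "x \<notin> U"
  proof
    assume "x \<in> U"
    then have "finite (f ` {n. f n \<notin> U})" using fin_lemma[OF lim oU] by blast
    moreover have "range f - U = f ` {n. f n \<notin> U}" by blast
    ultimately show False using U(2) unfolding splits_def by simp
  qed
  moreover have "x \<in> closure U"
  proof (rule ccontr)
    assume "x \<notin> closure U"
    then have "x \<in> - closure U" by simp
    then have "finite (f ` {n. f n \<notin> - closure U})" using fin_lemma[OF lim] by blast
    moreover have "range f \<inter> U \<subseteq> f ` {n. f n \<notin> - closure U}"
      using closure_subset[of U] by blast
    ultimately show False using U(2) finite_subset unfolding splits_def by blast
  qed
  ultimately show ?thesis using U(1) oU by (auto simp: frontier_def interior_open)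
qed

theorem theorem3p1:
  shows "\<forall>\<U>. open_splitting_family \<U> \<longrightarrow> (\<exists>\<F>. meager_cover \<F> \<and> \<F> \<lesssim> \<U>)"
proof (intro allI impI)
  fix \<U> assume A: "open_splitting_family \<U>"
  have "meager_cover (frontier ` \<U>)"
    unfolding meager_cover_def
  proof
    show "\<forall>M\<in>frontier ` \<U>. meager M"
      using A meager_frontier unfolding open_splitting_family_def by blast
    show "\<Union> (frontier ` \<U>) = UNIV" using covered[OF A] by blast
  qed
  then show "\<exists>\<F>. meager_cover \<F> \<and> \<F> \<lesssim> \<U>" using image_lepoll by blast
qed

end
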